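(* Let $\phi$ be an admissible action density and let $\tilde\phi$ be its partial Legendre transform. Then: (1) For every $\rho>0$ the map $w\mapsto\phi(\rho,w)^{1/p}$ is a norm on $\mathbb R^d$ whose dual norm is $z\mapsto\tilde\phi(\rho,z)^{1/q}$, i.e. $\tilde\phi(\rho,z)^{1/q}=\sup_{w\neq0}\frac{w\cdot z}{\phi(\rho,w)^{1/p}}$ and $\phi(\rho,w)^{1/p}=\sup_{z\ne0}\frac{w\cdot z}{\tilde\phi(\rho,z)^{1/q}}$; in particular $\tilde\phi(\rho,\cdot)$ is $q$-homogeneous. (2) $\tilde\phi$ takes values in $[0,\infty)$ and, for every $z\in\mathbb R^d$, $\rho\mapsto\tilde\phi(\rho,z)$ is concave and nondecreasing on $(0,\infty)$; for every $w\in\mathbb R^d$, $\rho\mapsto\phi(\rho,w)$ is convex and nonincreasing on $(0,\infty)$. (3) There exist constants $a,b\ge0$, not both zero, such that $\tilde\phi(\rho,z)\le(a+b\rho)|z|^q$ and $\phi(\rho,w)\ge(a+b\rho)^{1-p}|w|^p$ for all $\rho>0$, $z,w\in\mathbb R^d$. (4) For every compact interval $[\rho_0,\rho_1]\subset(0,\infty)$ there is $C>0$ such that for all $\rho\in[\rho_0,\rho_1]$ and $w,z\in\mathbb R^d$: $C^{-1}|w|^p\le\phi(\rho,w)\le C|w|^p$ and $C^{-1}|z|^q\le\tilde\phi(\rho,z)\le C|z|^q$. Conversely, a function $\phi:(0,\infty)\times\mathbb R^d\to[0,\infty)$ is an admissible action density if and only if it admits the representation $\frac1p\phi(\rho,w)=\sup_{z\in\mathbb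 R^d}\big(w\cdot z-\frac1q\tilde\phi(\rho,z)\big)$ for all $\rho>0,w\in\mathbb R^d$, for some function $\tilde\phi:(0,\infty)\times\mathbb R^d\to[0,\infty)$ which is convex and $q$-homogeneous in $z$, satisfies $\tilde\phi(\rho,z)>0$ for $z\neq0$, and is concave in $\rho$.
   Context: $p\in(1,\infty)$ and $q=p/(p-1)$. An admissible action density is a function $\phi:(0,\infty)\times\mathbb R^d\to[0,\infty)$ which is convex, satisfies $\phi(\rho,\lambda w)=|\lambda|^p\phi(\rho,w)$ for all $\rho>0,\lambda\in\mathbb R,w\in\mathbb R^d$, and for which there is $\rho_0>0$ with $\phi(\rho_0,w)>0$ for all $w\ne0$. Its partial Legendre transform $\tilde\phi:(0,\infty)\times\mathbb R^d\to(-\infty,+\infty]$ is defined by $\frac1q\tilde\phi(\rho,z):=\sup_{w\in\mathbb R^d}\big(z\cdot w-\frac1p\phi(\rho,w)\big)$. *)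

theory Defs
  imports "HOL-Analysis.Analysis"
begin

text \<open>Functions on (0,infinity) x R^d are modelled as total functions
  real => 'a => real, with all conditions restricted to rho > 0.\<close>

definition admissible :: "real \<Rightarrow> (real \<Rightarrow> 'a::euclidean_space \<Rightarrow> real) \<Rightarrow> bool" where
  "admissible p \<phi> \<longleftrightarrow>
     (\<forall>\<rho>>0. \<forall>w. 0 \<le> \<phi> \<rho> w) \<and>
     convex_on ({0<..} \<times> UNIV) (\<lambda>x. \<phi> (fst x) (snd x)) \<and>
     (\<forall>\<rho>>0. \<forall>t w. \<phi> \<rho> (t *\<^sub>R w) = \<bar>t\<bar> powr p * \<phi> \<rho> w) \<and>
     (\<exists>\<rho>0>0. \<forall>w. w \<noteq> 0 \<longrightarrow> \<phi> \<rho>0 w > 0)"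

definition legendre_ereal ::
  "real \<Rightarrow> real \<Rightarrow> (real \<Rightarrow> 'a::euclidean_space \<Rightarrow> real) \<Rightarrow> real \<Rightarrow> 'a \<Rightarrow> ereal" where
  "legendre_ereal p q \<phi> \<rho> z = ereal q * (SUP w. ereal (z \<bullet> w - \<phi> \<rho> w / p))"

text \<open>Its real-valued version (meaningful once finiteness is known).\<close>
definition legendre ::
  "real \<Rightarrow> real \<Rightarrow> (real \<Rightarrow> 'a::euclidean_space \<Rightarrow> real) \<Rightarrow> real \<Rightarrow> 'a \<Rightarrow> real" where
  "legendre p q \<phi> \<rho> z = real_of_ereal (legendre_ereal p q \<phi> \<rho> z)"

definition is_norm :: "('a::real_vector \<Rightarrow> real) \<Rightarrow> bool" where
  "is_norm N \<longleftrightarrow> (\<forall>x. 0 \<le> N x) \<and> (\<forall>x. N x = 0 \<longleftrightarrow> x = 0) \<and>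
     (\<forall>c x. N (c *\<^sub>R x) = \<bar>c\<bar> * N x) \<and> (\<forall>x y. N (x + y) \<le> N x + N y)"

end

theory Submission
  imports Defs
begin

locale pnorm =
  fixes p q :: real and f :: "'a::euclidean_space \<Rightarrow> real"
  assumes p1: "p > 1" and hq: "q = p / (p - 1)"
    and nonneg: "\<And>w. 0 \<le> f w"
    and cvx: "convex_on UNIV f"
    and hom: "\<And>t w. f (t *\<^sub>R w) = \<bar>t\<bar> powr p * f w"
    and pos: "\<And>w. w \<noteq> 0 \<Longrightarrow> 0 < f w"
begin

lemma q1: "q > 1" unfolding hq using p1 by (simp add: less_divide_eq)
lemma pq: "1/p + 1/q = 1" unfolding hq using p1 by (simp add: field_simps)
lemma pq2: "(p - 1) * q = p" using p1 hq by (simp add: field_simps)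
lemma pq3: "(q - 1) * p = q" unfolding hq using p1 by (simp add: field_simps)

lemma f0: "f 0 = 0" using hom[of 0 0] p1 by simp
lemma fneg: "f (- w) = f w" using hom[of "-1" w] by simp

lemma cont: "continuous_on UNIV f"
  using convex_on_continuous[OF open_UNIV cvx] .

lemma f_scale: "w \<noteq> 0 \<Longrightarrow> f w = norm w powr p * f (w /\<^sub>R norm w)"
  using hom[of "norm w" "w /\<^sub>R norm w"] by simp

lemma lower: "\<exists>m>0. \<forall>w. m * norm w powr p \<le> f w"
proof -
  have "compact (sphere (0::'a) 1)" "sphere (0::'a) 1 \<noteq> {}" by auto
  then obtain u where u: "u \<in> sphere 0 1" "\<forall>y\<in>sphere 0 1. f u \<le> f y"
    using continuous_attains_inf[of "sphere (0::'a) 1" f] continuous_on_subset[OF cont] by blast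
  have "u \<noteq> 0" using u by auto
  hence m: "f u > 0" using pos by auto
  show ?thesis
  proof (intro exI[of _ "f u"] conjI allI m)
    fix w :: 'a
    show "f u * norm w powr p \<le> f w"
    proof (cases "w = 0")
      case True thus ?thesis by (simp add: f0)
    next
      case False
      hence "f u * norm w powr p \<le> f (w /\<^sub>R norm w) * norm w powr p" using u by (intro mult_right_mono) auto
      thus ?thesis using f_scale[OF False] by (simp add: mult.commute)
    qed
  qed
qed

lemma upper: "\<exists>M>0. \<forall>w. f w \<le> M * norm w powr p"
proof -
  have "compact (sphere (0::'a) 1)" "sphere (0::'a) 1 \<noteq> {}" by auto
  then obtain u where u: "u \<in> sphere 0 1" "\<forall>y\<in>sphere 0 1. f y \<le> f u"
    using continuous_attains_sup[of "sphere (0::'a) 1" f] continuous_on_subset[OF cont] by blast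
  have "u \<noteq> 0" using u by auto
  hence m: "f u > 0" using pos by auto
  show ?thesis
  proof (intro exI[of _ "f u"] conjI allI m)
    fix w :: 'a
    show "f w \<le> f u * norm w powr p"
    proof (cases "w = 0")
      case True thus ?thesis by (simp add: f0)
    next
      case False
      hence "f (w /\<^sub>R norm w) * norm w powr p \<le> f u * norm w powr p" using u by (intro mult_right_mono) auto
      thus ?thesis using f_scale[OF False] by (simp add: mult.commute)
    qed
  qed
qed

definition "B = {w. f w \<le> 1}"

lemma B0: "0 \<in> B" by (simp add: B_def f0)
lemma B_closed: "closed B" unfolding B_def
  by (rule closed_Collect_le[OF cont continuous_on_const])
lemma B_convex: "convex B" unfolding B_def
  using convex_on_imp_convex cvx convex_lower unfolding convex_def
  by (smt (verit, best) UNIV_I convex_on_def mem_Collect_eq)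
lemma B_bounded: "bounded B"
proof -
  obtain m where m: "m > 0" "\<forall>w. m * norm w powr p \<le> f w" using lower by blast
  have "norm w \<le> max 1 (1/m)" if "w \<in> B" for w
  proof (rule ccontr)
    assume "\<not> ?thesis"
    hence w1: "norm w > 1" "norm w > 1/m" by auto
    have "norm w \<le> norm w powr p" using w1 p1
      by (metis less_eq_real_def powr_le_cancel_iff powr_one_gt_zero_iff powr_one_eq_one order_less_trans zero_less_one)
    hence "m * norm w \<le> m * norm w powr p" using m by simp
    also have "\<dots> \<le> 1" using m that B_def by (smt (verit) mem_Collect_eq)
    finally show False using w1 m by (simp add: field_simps)
  qed
  thus ?thesis unfolding bounded_iff by blast
qed
lemma B_compact: "compact B" using B_closed B_bounded compact_eq_bounded_closed by blast

definition "D z = Sup ((\<lambda>w. w \<bullet> z) ` B)"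

lemma D_att: "\<exists>w\<in>B. w \<bullet> z = D z \<and> (\<forall>v\<in>B. v \<bullet> z \<le> D z)"
proof -
  obtain w where w: "w \<in> B" "\<forall>v\<in>B. v \<bullet> z \<le> w \<bullet> z"
    using continuous_attains_sup[OF B_compact, of "\<lambda>w. w \<bullet> z"] B0
      continuous_on_inner[OF continuous_on_id continuous_on_const, of B z]
    by blast
  have "D z = w \<bullet> z" unfolding D_def using w by (intro cSup_eq_maximum) auto
  thus ?thesis using w by auto
qed

lemma D_ge: "v \<in> B \<Longrightarrow> v \<bullet> z \<le> D z" using D_att by blast
lemma D_nonneg: "0 \<le> D z" using D_ge[OF B0] by simp

definition "N w = f w powr (1/p)"

lemma N_nonneg: "0 \<le> N w" by (simp add: N_def)
lemma N_pow: "N w powr p = f w" using p1 nonneg[of w] by (simp add: N_def powr_powr)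
lemma N_pos: "w \<noteq> 0 \<Longrightarrow> 0 < N w" using pos[of w] by (simp add: N_def)
lemma N0: "N 0 = 0" by (simp add: N_def f0)
lemma N_eq0: "N w = 0 \<longleftrightarrow> w = 0" using N_pos N0 by force
lemma N_hom: "N (c *\<^sub>R w) = \<bar>c\<bar> * N w"
  using p1 by (simp add: N_def hom powr_mult powr_powr)

lemma f_unit: assumes "w \<noteq> 0" shows "f (w /\<^sub>R N w) = 1"
proof -
  have n: "N w > 0" using N_pos[OF assms] .
  have "f (w /\<^sub>R N w) = inverse (N w) powr p * f w" using hom n by simp
  also have "\<dots> = inverse (N w powr p) * N w powr p" by (simp add: N_pow inverse_powr)
  also have "\<dots> = 1" using n by simp
  finally show ?thesis .
qed

lemma unit_B: "w \<noteq> 0 \<Longrightarrow> w /\<^sub>R N w \<in> B" using f_unit by (simp add: B_def)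

lemma inner_le: "w \<bullet> z \<le> N w * D z"
proof (cases "w = 0")
  case True thus ?thesis by (simp add: N0)
next
  case False
  have n: "N w > 0" using N_pos[OF False] .
  have "(w /\<^sub>R N w) \<bullet> z \<le> D z" using D_ge[OF unit_B[OF False]] .
  hence "(w \<bullet> z) / N w \<le> D z" by (simp add: divide_inverse mult.commute)
  thus ?thesis using n by (simp add: divide_le_eq mult.commute)
qed

lemma young: "w \<bullet> z \<le> f w / p + D z powr q / q"
proof -
  have "N w * D z \<le> N w powr p / p + D z powr q / q"
    using Youngs_inequality[OF p1 q1 pq N_nonneg D_nonneg] .
  thus ?thesis using inner_le[of w z] by (simp add: N_pow)
qed

lemma leg_le: "z \<bullet> w - f w / p \<le> D z powr q / q"
  using young[of w z] by (simp add: inner_commute)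

lemma leg_att: "\<exists>w. D z powr q / q \<le> z \<bullet> w - f w / p"
proof (cases "D z = 0")
  case True thus ?thesis by (intro exI[of _ 0]) (simp add: f0)
next
  case False
  hence d: "D z > 0" using D_nonneg by (simp add: order_less_le)
  obtain w0 where w0: "w0 \<in> B" "w0 \<bullet> z = D z" using D_att by blast
  define w where "w = D z powr (q - 1) *\<^sub>R w0"
  have zw: "z \<bullet> w = D z powr q" using d
    by (simp add: w_def inner_commute w0 powr_diff)
  have "f w = (D z powr (q - 1)) powr p * f w0" by (simp add: w_def hom)
  also have "\<dots> = D z powr q * f w0" by (simp add: powr_powr pq3)
  also have "\<dots> \<le> D z powr q" using w0 B_def by (simp add: mult_left_le)
  finally have "f w \<le> D z powr q" .
  hence "z \<bullet> w - f w / p \<ge> D z powr q - D z powr q / p" using p1 zw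
    by (simp add: divide_right_mono)
  moreover have "D z powr q - D z powr q / p = D z powr q / q"
  proof -
    have e: "1/q = 1 - 1/p" using pq by linarith
    have "D z powr q / q = D z powr q * (1/q)" by simp
    also have "\<dots> = D z powr q * (1 - 1/p)" by (simp only: e)
    also have "\<dots> = D z powr q - D z powr q / p" by (simp add: algebra_simps)
    finally show ?thesis by simp
  qed
  ultimately show ?thesis by auto
qed

lemma leg_sup: "(SUP w. ereal (z \<bullet> w - f w / p)) = ereal (D z powr q / q)"
proof (rule antisym)
  show "(SUP w. ereal (z \<bullet> w - f w / p)) \<le> ereal (D z powr q / q)"
    by (rule SUP_least) (simp add: leg_le)
  obtain w where "D z powr q / q \<le> z \<bullet> w - f w / p" using leg_att by blast
  hence "ereal (D z powr q / q) \<le> ereal (z \<bullet> w - f w / p)" by simp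
  also have "\<dots> \<le> (SUP w. ereal (z \<bullet> w - f w / p))" by (rule SUP_upper) simp
  finally show "ereal (D z powr q / q) \<le> (SUP w. ereal (z \<bullet> w - f w / p))" .
qed

lemma N_tri: "N (x + y) \<le> N x + N y"
proof (cases "x = 0 \<or> y = 0")
  case True thus ?thesis by (auto simp: N0)
next
  case False
  hence x: "x \<noteq> 0" and y: "y \<noteq> 0" by auto
  define a b where "a = N x" and "b = N y"
  have a: "a > 0" and b: "b > 0" using N_pos x y by (auto simp: a_def b_def)
  define t where "t = a / (a + b)"
  have t: "0 \<le> t" "t \<le> 1" "1 - t = b / (a + b)" using a b by (auto simp: t_def field_simps)
  have "f (t *\<^sub>R (x /\<^sub>R a) + (1 - t) *\<^sub>R (y /\<^sub>R b)) \<le> t * f (x /\<^sub>R a) + (1 - t) * f (y /\<^sub>R b)"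
    using cvx t unfolding convex_on_def by (metis UNIV_I diff_add_cancel diff_ge_0_iff_ge add.commute)
  also have "\<dots> = 1" using f_unit x y by (simp add: a_def b_def)
  finally have le1: "f (t *\<^sub>R (x /\<^sub>R a) + (1 - t) *\<^sub>R (y /\<^sub>R b)) \<le> 1" .
  have eq: "x + y = (a + b) *\<^sub>R (t *\<^sub>R (x /\<^sub>R a) + (1 - t) *\<^sub>R (y /\<^sub>R b))"
    using a b t(3) by (simp add: t_def scaleR_add_right)
  have "f (x + y) = (a + b) powr p * f (t *\<^sub>R (x /\<^sub>R a) + (1 - t) *\<^sub>R (y /\<^sub>R b))"
    using a b by (subst eq, subst hom) simp
  also have "\<dots> \<le> (a + b) powr p" using le1 by (simp add: mult_left_le)
  finally have "f (x + y) \<le> (a + b) powr p" .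
  hence "f (x + y) powr (1/p) \<le> ((a + b) powr p) powr (1/p)"
    using p1 nonneg by (intro powr_mono2) auto
  also have "\<dots> = a + b" using p1 a b by (simp add: powr_powr)
  finally show ?thesis by (simp add: N_def a_def b_def)
qed

lemma N_norm: "is_norm N"
  unfolding is_norm_def using N_nonneg N_eq0 N_hom N_tri by blast

lemma D_neg: "D (- z) = D z"
proof -
  have *: "D (- z) \<le> D z" for z
  proof -
    obtain w where w: "w \<in> B" "w \<bullet> (- z) = D (- z)" using D_att by blast
    have "- w \<in> B" using w fneg by (simp add: B_def)
    hence "(- w) \<bullet> z \<le> D z" by (rule D_ge)
    thus ?thesis using w by simp
  qed
  show ?thesis using *[of z] *[of "- z"] by simp
qed

lemma D_hom_pos: assumes "c \<ge> 0" shows "D (c *\<^sub>R z) = c * D z"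
proof (rule antisym)
  obtain w where w: "w \<in> B" "w \<bullet> (c *\<^sub>R z) = D (c *\<^sub>R z)" using D_att by blast
  have "w \<bullet> z \<le> D z" using D_ge[OF w(1)] .
  hence "c * (w \<bullet> z) \<le> c * D z" using assms by (rule mult_left_mono)
  thus "D (c *\<^sub>R z) \<le> c * D z" using w by simp
  obtain v where v: "v \<in> B" "v \<bullet> z = D z" using D_att by blast
  show "c * D z \<le> D (c *\<^sub>R z)" using D_ge[OF v(1), of "c *\<^sub>R z"] v by simp
qed

lemma D_hom: "D (c *\<^sub>R z) = \<bar>c\<bar> * D z"
proof (cases "c \<ge> 0")
  case True thus ?thesis using D_hom_pos by simp
next
  case False
  have "D (c *\<^sub>R z) = D ((- c) *\<^sub>R (- z))" by simp
  also have "\<dots> = (- c) * D (- z)" using False by (intro D_hom_pos) simp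
  finally show ?thesis using False D_neg by simp
qed

lemma D0: "D 0 = 0" using D_hom[of 0 0] by simp

lemma D_pos: assumes "z \<noteq> 0" shows "D z > 0"
proof -
  have "(z /\<^sub>R N z) \<bullet> z \<le> D z" using D_ge[OF unit_B[OF assms]] .
  moreover have "(z /\<^sub>R N z) \<bullet> z > 0" using assms N_pos[OF assms] by simp
  ultimately show ?thesis by linarith
qed

lemma D_tri: "D (x + y) \<le> D x + D y"
proof -
  obtain w where w: "w \<in> B" "w \<bullet> (x + y) = D (x + y)" using D_att by blast
  thus ?thesis using D_ge[OF w(1), of x] D_ge[OF w(1), of y] by (simp add: inner_add_right)
qed

lemma D_norm: "is_norm D"
  unfolding is_norm_def using D_nonneg D_pos D0 D_hom D_tri
  by (metis less_numeral_extra(3))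

lemma exists_nz: "\<exists>w::'a. w \<noteq> 0"
  using nonzero_Basis SOME_Basis by blast

lemma dual1: "(SUP w\<in>-{0}. ereal ((w \<bullet> z) / N w)) = ereal (D z)"
proof (rule antisym)
  show "(SUP w\<in>-{0}. ereal ((w \<bullet> z) / N w)) \<le> ereal (D z)"
  proof (rule SUP_least)
    fix w :: 'a assume "w \<in> - {0}"
    hence "N w > 0" using N_pos by auto
    thus "ereal ((w \<bullet> z) / N w) \<le> ereal (D z)" using inner_le[of w z]
      by (simp add: divide_le_eq mult.commute)
  qed
  show "ereal (D z) \<le> (SUP w\<in>-{0}. ereal ((w \<bullet> z) / N w))"
  proof (cases "z = 0")
    case True
    obtain w :: 'a where "w \<noteq> 0" using exists_nz by blast
    hence "ereal ((w \<bullet> z) / N w) \<le> (SUP w\<in>-{0}. ereal ((w \<bullet> z) / N w))"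
      by (intro SUP_upper) auto
    thus ?thesis using True by (simp add: D0)
  next
    case False
    obtain w where w: "w \<in> B" "w \<bullet> z = D z" using D_att by blast
    have d: "D z > 0" using D_pos[OF False] .
    hence wn: "w \<noteq> 0" using w by auto
    have n: "N w > 0" "N w \<le> 1" using N_pos[OF wn] w p1 powr_mono2[of "1/p" "f w" 1] nonneg[of w] by (auto simp: N_def B_def)
    have "D z \<le> (w \<bullet> z) / N w" using n d w by (simp add: le_divide_eq mult_left_le)
    hence "ereal (D z) \<le> ereal ((w \<bullet> z) / N w)" by simp
    also have "\<dots> \<le> (SUP w\<in>-{0}. ereal ((w \<bullet> z) / N w))" using wn by (intro SUP_upper) auto
    finally show ?thesis .
  qed
qed

lemma support: assumes "w \<noteq> 0" shows "\<exists>z0. z0 \<noteq> 0 \<and> (w /\<^sub>R N w) \<bullet> z0 = D z0"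
proof -
  define u where "u = w /\<^sub>R N w"
  have fu: "f u = 1" using f_unit[OF assms] by (simp add: u_def)
  have uB: "u \<in> B" using fu by (simp add: B_def)
  have u0: "u \<noteq> 0" using fu f0 by auto
  have op: "open {v. f v < 1}" by (rule open_Collect_less[OF cont continuous_on_const])
  have "{v. f v < 1} \<subseteq> B" by (auto simp: B_def)
  hence "{v. f v < 1} \<subseteq> interior B" using op by (rule interior_maximal)
  hence "0 \<in> interior B" using f0 by auto
  hence ri: "rel_interior B = interior B" using rel_interior_nonempty_interior by blast
  have "u \<notin> interior B"
  proof
    assume "u \<in> interior B"
    then obtain e where e: "e > 0" "ball u e \<subseteq> B" using mem_interior by blast
    define v where "v = (1 + e / (2 * norm u)) *\<^sub>R u"
    have nu: "norm u > 0" using u0 by simp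
    have "u - v = - ((e / (2 * norm u)) *\<^sub>R u)" by (simp add: v_def algebra_simps)
    hence "dist u v = \<bar>e / (2 * norm u)\<bar> * norm u" by (simp add: dist_norm)
    also have "\<dots> = e / 2" using nu e by simp
    finally have "dist u v = e / 2" .
    hence "v \<in> B" using e by auto
    moreover have "f v = (1 + e / (2 * norm u)) powr p"
    proof -
      have "f v = \<bar>1 + e / (2 * norm u)\<bar> powr p * f u" unfolding v_def by (rule hom)
      thus ?thesis using fu nu e by simp
    qed
    moreover have "(1 + e / (2 * norm u)) powr p > 1" using nu e p1
      by (intro gr_one_powr) auto
    ultimately show False by (simp add: B_def)
  qed
  hence "u \<notin> rel_interior B" using ri by simp
  moreover have "u \<in> closure B" using uB closure_subset by blast
  ultimately obtain a where a: "a \<noteq> 0" "\<And>y. y \<in> closure B \<Longrightarrow> a \<bullet> u \<le> a \<bullet> y"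
    using supporting_hyperplane_relative_frontier[OF B_convex] by blast
  have "\<forall>y\<in>B. y \<bullet> (- a) \<le> u \<bullet> (- a)"
  proof
    fix y assume "y \<in> B"
    hence "a \<bullet> u \<le> a \<bullet> y" using a(2) closure_subset by blast
    thus "y \<bullet> (- a) \<le> u \<bullet> (- a)" by (simp add: inner_commute)
  qed
  moreover obtain y where "y \<in> B" "y \<bullet> (- a) = D (- a)" using D_att by blast
  ultimately have "u \<bullet> (- a) = D (- a)" using D_ge[OF uB, of "- a"] by force
  thus ?thesis using a(1) by (intro exI[of _ "- a"]) (simp add: u_def)
qed


lemma dual2: "(SUP z\<in>-{0}. ereal ((w \<bullet> z) / D z)) = ereal (N w)"
proof (rule antisym)
  show "(SUP z\<in>-{0}. ereal ((w \<bullet> z) / D z)) \<le> ereal (N w)"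
  proof (rule SUP_least)
    fix z :: 'a assume "z \<in> - {0}"
    hence "D z > 0" using D_pos by auto
    thus "ereal ((w \<bullet> z) / D z) \<le> ereal (N w)" using inner_le[of w z]
      by (simp add: divide_le_eq)
  qed
  show "ereal (N w) \<le> (SUP z\<in>-{0}. ereal ((w \<bullet> z) / D z))"
  proof (cases "w = 0")
    case True
    obtain z :: 'a where "z \<noteq> 0" using exists_nz by blast
    hence "ereal ((w \<bullet> z) / D z) \<le> (SUP z\<in>-{0}. ereal ((w \<bullet> z) / D z))"
      by (intro SUP_upper) auto
    thus ?thesis using True by (simp add: N0)
  next
    case False
    obtain z0 where z0: "z0 \<noteq> 0" "(w /\<^sub>R N w) \<bullet> z0 = D z0" using support[OF False] by blast
    have d: "D z0 > 0" using D_pos[OF z0(1)] .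
    have n: "N w > 0" using N_pos[OF False] .
    have "w \<bullet> z0 = N w * D z0" using z0(2) n by (simp add: field_simps)
    hence "(w \<bullet> z0) / D z0 = N w" using d by simp
    hence "ereal (N w) = ereal ((w \<bullet> z0) / D z0)" by simp
    also have "\<dots> \<le> (SUP z\<in>-{0}. ereal ((w \<bullet> z) / D z))" using z0 by (intro SUP_upper) auto
    finally show ?thesis .
  qed
qed

lemma bidual: "(SUP z. ereal (w \<bullet> z - D z powr q / q)) = ereal (f w / p)"
proof (rule antisym)
  show "(SUP z. ereal (w \<bullet> z - D z powr q / q)) \<le> ereal (f w / p)"
    by (rule SUP_least) (use young in \<open>simp add: algebra_simps\<close>)
  show "ereal (f w / p) \<le> (SUP z. ereal (w \<bullet> z - D z powr q / q))"
  proof (cases "w = 0")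
    case True
    have "ereal (w \<bullet> 0 - D 0 powr q / q) \<le> (SUP z. ereal (w \<bullet> z - D z powr q / q))"
      by (rule SUP_upper) simp
    thus ?thesis using True by (simp add: D0 f0)
  next
    case False
    obtain z0 where z0: "z0 \<noteq> 0" "(w /\<^sub>R N w) \<bullet> z0 = D z0" using support[OF False] by blast
    have d: "D z0 > 0" using D_pos[OF z0(1)] .
    have n: "N w > 0" using N_pos[OF False] .
    have wz0: "w \<bullet> z0 = N w * D z0" using z0(2) n by (simp add: field_simps)
    define s where "s = N w powr (p - 1) / D z0"
    have s: "s > 0" using n d by (simp add: s_def)
    have Dz: "D (s *\<^sub>R z0) = N w powr (p - 1)" using s d by (simp add: D_hom s_def)
    have wz: "w \<bullet> (s *\<^sub>R z0) = N w powr p"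
      using wz0 d n by (simp add: s_def powr_diff)
    have Dq: "D (s *\<^sub>R z0) powr q = N w powr p" by (simp add: Dz powr_powr pq2)
    have "f w / p = N w powr p - N w powr p / q"
    proof -
      have e: "1/p = 1 - 1/q" using pq by linarith
      have "f w / p = N w powr p * (1/p)" by (simp add: N_pow)
      also have "\<dots> = N w powr p * (1 - 1/q)" by (simp only: e)
      also have "\<dots> = N w powr p - N w powr p / q" by (simp add: algebra_simps)
      finally show ?thesis .
    qed
    hence "ereal (f w / p) = ereal (w \<bullet> (s *\<^sub>R z0) - D (s *\<^sub>R z0) powr q / q)"
      using wz Dq by simp
    also have "\<dots> \<le> (SUP z. ereal (w \<bullet> z - D z powr q / q))" by (rule SUP_upper) simp
    finally show ?thesis .
  qed
qed

lemma B_rad: "\<exists>r>0. \<forall>w\<in>B. norm w \<le> r"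
  using B_bounded unfolding bounded_pos by blast

lemma D_upper: "\<exists>K>0. \<forall>z. D z \<le> K * norm z"
proof -
  obtain r where r: "r > 0" "\<forall>w\<in>B. norm w \<le> r" using B_rad by blast
  have "D z \<le> r * norm z" for z
  proof -
    obtain w where w: "w \<in> B" "w \<bullet> z = D z" using D_att by blast
    have "w \<bullet> z \<le> norm w * norm z" by (rule norm_cauchy_schwarz)
    also have "\<dots> \<le> r * norm z" using r w by (intro mult_right_mono) auto
    finally show ?thesis using w by simp
  qed
  thus ?thesis using r by blast
qed

lemma D_lower: "\<exists>k>0. \<forall>z. k * norm z \<le> D z"
proof -
  obtain M where M: "M > 0" "\<forall>w. f w \<le> M * norm w powr p" using upper by blast
  define K where "K = max 1 M"
  have K: "K \<ge> 1" "K \<ge> M" by (auto simp: K_def)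
  have "(1/K) * norm z \<le> D z" for z
  proof (cases "z = 0")
    case True thus ?thesis by (simp add: D0)
  next
    case False
    define u where "u = (1 / (K * norm z)) *\<^sub>R z"
    have nu: "norm u = 1 / K" using False K by (simp add: u_def)
    have "f u \<le> M * (1/K) powr p" using M(2)[rule_format, of u] nu by simp
    also have "\<dots> \<le> M * (1/K) powr 1" using K p1
      using M(1) by (intro mult_left_mono powr_mono') auto
    also have "\<dots> \<le> 1" using K M by (simp add: field_simps)
    finally have "u \<in> B" by (simp add: B_def)
    hence "u \<bullet> z \<le> D z" by (rule D_ge)
    moreover have "u \<bullet> z = (1/K) * norm z" using False K
      by (simp add: u_def inner_commute power2_norm_eq_inner[symmetric] power2_eq_square)
    ultimately show ?thesis by simp
  qed
  moreover have "1/K > 0" using K by simp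
  ultimately show ?thesis by blast
qed

end

lemma adm_jc:
  assumes "admissible p \<phi>" "0 < \<rho>1" "0 < \<rho>2" "0 \<le> u" "0 \<le> v" "u + v = 1"
  shows "\<phi> (u * \<rho>1 + v * \<rho>2) (u *\<^sub>R w1 + v *\<^sub>R w2) \<le> u * \<phi> \<rho>1 w1 + v * \<phi> \<rho>2 w2"
proof -
  have c: "convex_on ({0<..} \<times> UNIV) (\<lambda>x. \<phi> (fst x) (snd x))" using assms(1) by (simp add: admissible_def)
  have "(\<rho>1, w1) \<in> {0<..} \<times> UNIV" "(\<rho>2, w2) \<in> {0<..} \<times> UNIV" using assms by auto
  from c[unfolded convex_on_def] this assms(4-6)
  have "(\<lambda>x. \<phi> (fst x) (snd x)) (u *\<^sub>R (\<rho>1, w1) + v *\<^sub>R (\<rho>2, w2)) \<le> u * \<phi> \<rho>1 w1 + v * \<phi> \<rho>2 w2"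
    by fastforce
  thus ?thesis by simp
qed

lemma adm_nonneg: "admissible p \<phi> \<Longrightarrow> 0 < \<rho> \<Longrightarrow> 0 \<le> \<phi> \<rho> w"
  by (simp add: admissible_def)
lemma adm_hom: "admissible p \<phi> \<Longrightarrow> 0 < \<rho> \<Longrightarrow> \<phi> \<rho> (t *\<^sub>R w) = \<bar>t\<bar> powr p * \<phi> \<rho> w"
  by (simp add: admissible_def)
lemma adm_zero: "admissible p \<phi> \<Longrightarrow> 0 < \<rho> \<Longrightarrow> \<phi> \<rho> 0 = 0"
  using adm_hom[of p \<phi> \<rho> 0 0] by simp

lemma adm_cvx_w: assumes "admissible p \<phi>" "0 < \<rho>" shows "convex_on UNIV (\<phi> \<rho>)"
  unfolding convex_on_def
proof (intro conjI ballI allI impI convex_UNIV)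
  fix x y :: 'a and u v :: real assume "0 \<le> u" "0 \<le> v" "u + v = 1"
  thus "\<phi> \<rho> (u *\<^sub>R x + v *\<^sub>R y) \<le> u * \<phi> \<rho> x + v * \<phi> \<rho> y"
    using adm_jc[OF assms(1) assms(2) assms(2), of u v x y] by (simp add: distrib_right[symmetric])
qed

lemma adm_cvx_rho: assumes "admissible p \<phi>" shows "convex_on {0<..} (\<lambda>\<rho>. \<phi> \<rho> w)"
  unfolding convex_on_def
proof (intro conjI ballI allI impI)
  show "convex {0::real<..}" by (simp add: convex_real_interval)
  fix x y :: real and u v :: real assume h: "x \<in> {0<..}" "y \<in> {0<..}" "0 \<le> u" "0 \<le> v" "u + v = 1"
  have "u *\<^sub>R w + v *\<^sub>R w = w" using h(5) by (simp add: scaleR_add_left[symmetric])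
  thus "\<phi> (u *\<^sub>R x + v *\<^sub>R y) w \<le> u * \<phi> x w + v * \<phi> y w"
    using adm_jc[OF assms(1), of x y u v w w] h by simp
qed

lemma adm_mono:
  assumes adm: "admissible p \<phi>" and p1: "p > 1" and r: "0 < \<rho>1" "\<rho>1 \<le> \<rho>2"
  shows "\<phi> \<rho>2 w \<le> \<phi> \<rho>1 w"
proof (rule ccontr)
  assume "\<not> ?thesis"
  hence gt: "\<phi> \<rho>1 w < \<phi> \<rho>2 w" by simp
  define f1 f2 where "f1 = \<phi> \<rho>1 w" and "f2 = \<phi> \<rho>2 w"
  have f1: "0 \<le> f1" using adm_nonneg[OF adm r(1)] by (simp add: f1_def)
  have f2: "0 < f2" using f1 gt by (simp add: f1_def f2_def)
  have lt: "\<rho>1 < \<rho>2" using gt r by (cases "\<rho>1 = \<rho>2") auto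
  define r where "r = (1 + f1 / f2) / 2"
  have r01: "0 < r" "r < 1" "f1 / f2 < r" using f1 f2 gt by (auto simp: r_def f1_def f2_def field_simps)
  define \<theta> where "\<theta> = r powr (1 / (p - 1))"
  have th: "0 < \<theta>" "\<theta> < 1" using r01 p1 powr_less_mono2[of "1/(p-1)" r 1] by (auto simp: \<theta>_def)
  have thr: "\<theta> powr (p - 1) = r" using r01 p1 by (simp add: \<theta>_def powr_powr)
  define R where "R = (\<rho>2 - \<theta> * \<rho>1) / (1 - \<theta>)"
  have "\<rho>1 * \<theta> < \<rho>1" using th r by simp
  hence R: "R > 0" using th lt by (auto simp: R_def field_simps intro!: divide_pos_pos)
  have comb: "\<theta> * \<rho>1 + (1 - \<theta>) * R = \<rho>2" using th by (simp add: R_def field_simps)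
  have combw: "\<theta> *\<^sub>R ((1/\<theta>) *\<^sub>R w) + (1 - \<theta>) *\<^sub>R (0::'a) = w" using th by simp
  have "\<phi> (\<theta> * \<rho>1 + (1 - \<theta>) * R) (\<theta> *\<^sub>R ((1/\<theta>) *\<^sub>R w) + (1 - \<theta>) *\<^sub>R 0)
        \<le> \<theta> * \<phi> \<rho>1 ((1/\<theta>) *\<^sub>R w) + (1 - \<theta>) * \<phi> R 0"
    using th R r(1) by (intro adm_jc[OF adm]) auto
  hence "f2 \<le> \<theta> * ((1/\<theta>) powr p * f1)"
    using th R adm_zero[OF adm R] adm_hom[OF adm r(1)] by (simp add: comb f1_def f2_def)
  also have "\<theta> * ((1/\<theta>) powr p * f1) = f1 / \<theta> powr (p - 1)"
    using th by (simp add: powr_divide powr_diff)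
  finally have "f2 * r \<le> f1" using th thr r01 by (simp add: le_divide_eq)
  thus False using r01 f2 by (simp add: field_simps)
qed

lemma adm_pos:
  assumes adm: "admissible p \<phi>" and p1: "p > 1" and r: "0 < \<rho>" and w: "w \<noteq> 0"
  shows "0 < \<phi> \<rho> w"
proof -
  obtain \<rho>0 where r0: "\<rho>0 > 0" "\<forall>w. w \<noteq> 0 \<longrightarrow> \<phi> \<rho>0 w > 0" using adm by (auto simp: admissible_def)
  show ?thesis
  proof (cases "\<rho> \<le> \<rho>0")
    case True thus ?thesis using adm_mono[OF adm p1 r True, of w] r0 w by force
  next
    case False
    show ?thesis
    proof (rule ccontr)
      assume "\<not> ?thesis"
      hence z: "\<phi> \<rho> w = 0" using adm_nonneg[OF adm r, of w] by simp
      define \<theta> where "\<theta> = \<rho>0 / (2 * \<rho>)"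
      have th: "0 < \<theta>" "\<theta> < 1" using False r0 r by (auto simp: \<theta>_def field_simps)
      define R where "R = (\<rho>0 / 2) / (1 - \<theta>)"
      have R: "R > 0" using th r0 by (simp add: R_def)
      have comb: "\<theta> * \<rho> + (1 - \<theta>) * R = \<rho>0" using th r by (simp add: R_def \<theta>_def field_simps)
      have "\<phi> (\<theta> * \<rho> + (1 - \<theta>) * R) (\<theta> *\<^sub>R ((1/\<theta>) *\<^sub>R w) + (1 - \<theta>) *\<^sub>R 0)
          \<le> \<theta> * \<phi> \<rho> ((1/\<theta>) *\<^sub>R w) + (1 - \<theta>) * \<phi> R 0"
        using th R r by (intro adm_jc[OF adm]) auto
      hence "\<phi> \<rho>0 w \<le> 0" using th adm_zero[OF adm R] adm_hom[OF adm r] z by (simp add: comb)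
      thus False using r0 w by force
    qed
  qed
qed

lemma adm_pnorm:
  assumes adm: "admissible p \<phi>" and p1: "p > 1" and hq: "q = p / (p - 1)" and r: "0 < \<rho>"
  shows "pnorm p q (\<phi> \<rho>)"
  by unfold_locales (use assms adm_nonneg adm_cvx_w adm_hom adm_pos in auto)

lemma psi_ereal:
  assumes adm: "admissible p \<phi>" and p1: "p > 1" and hq: "q = p / (p - 1)" and r: "0 < \<rho>"
  shows "legendre_ereal p q \<phi> \<rho> z = ereal (pnorm.D (\<phi> \<rho>) z powr q)"
proof -
  interpret pnorm p q "\<phi> \<rho>" by (rule adm_pnorm[OF assms])
  show ?thesis using q1 by (simp add: legendre_ereal_def leg_sup)
qed

lemma psi_eq:
  assumes adm: "admissible p \<phi>" and p1: "p > 1" and hq: "q = p / (p - 1)" and r: "0 < \<rho>"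
  shows "legendre p q \<phi> \<rho> z = pnorm.D (\<phi> \<rho>) z powr q"
  by (simp add: legendre_def psi_ereal[OF assms])

lemma psi_le:
  assumes adm: "admissible p \<phi>" and p1: "p > 1" and hq: "q = p / (p - 1)" and r: "0 < \<rho>"
  shows "z \<bullet> w - \<phi> \<rho> w / p \<le> legendre p q \<phi> \<rho> z / q"
proof -
  interpret pnorm p q "\<phi> \<rho>" by (rule adm_pnorm[OF assms])
  show ?thesis using leg_le psi_eq[OF assms] by simp
qed

lemma psi_att:
  assumes adm: "admissible p \<phi>" and p1: "p > 1" and hq: "q = p / (p - 1)" and r: "0 < \<rho>"
  shows "\<exists>w. legendre p q \<phi> \<rho> z / q \<le> z \<bullet> w - \<phi> \<rho> w / p"
proof -
  interpret pnorm p q "\<phi> \<rho>" by (rule adm_pnorm[OF assms])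
  show ?thesis using leg_att psi_eq[OF assms] by simp
qed

lemma psi_concave:
  assumes adm: "admissible p \<phi>" and p1: "p > 1" and hq: "q = p / (p - 1)"
  shows "concave_on {0<..} (\<lambda>\<rho>. legendre p q \<phi> \<rho> z)"
  unfolding concave_on_iff
proof (intro conjI ballI allI impI)
  show "convex {0::real<..}" by (simp add: convex_real_interval)
  fix x y u v :: real assume h: "x \<in> {0<..}" "y \<in> {0<..}" "0 \<le> u" "0 \<le> v" "u + v = 1"
  have q0: "q > 0" using hq p1 by simp
  obtain w1 where w1: "legendre p q \<phi> x z / q \<le> z \<bullet> w1 - \<phi> x w1 / p" using psi_att[OF adm p1 hq] h by auto
  obtain w2 where w2: "legendre p q \<phi> y z / q \<le> z \<bullet> w2 - \<phi> y w2 / p" using psi_att[OF adm p1 hq] h by auto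
  have rx: "u * x + v * y > 0" using h by (cases "u = 0") (auto intro: add_pos_nonneg add_nonneg_pos)
  have j: "\<phi> (u * x + v * y) (u *\<^sub>R w1 + v *\<^sub>R w2) \<le> u * \<phi> x w1 + v * \<phi> y w2"
    using h by (intro adm_jc[OF adm]) auto
  have "u * (legendre p q \<phi> x z / q) + v * (legendre p q \<phi> y z / q)
      \<le> u * (z \<bullet> w1 - \<phi> x w1 / p) + v * (z \<bullet> w2 - \<phi> y w2 / p)"
    using w1 w2 h by (intro add_mono mult_left_mono) auto
  also have "\<dots> = z \<bullet> (u *\<^sub>R w1 + v *\<^sub>R w2) - (u * \<phi> x w1 + v * \<phi> y w2) / p"
    by (simp add: inner_add_right algebra_simps add_divide_distrib)
  also have "\<dots> \<le> z \<bullet> (u *\<^sub>R w1 + v *\<^sub>R w2) - \<phi> (u * x + v * y) (u *\<^sub>R w1 + v *\<^sub>R w2) / p"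
    using j p1 by (simp add: divide_right_mono)
  also have "\<dots> \<le> legendre p q \<phi> (u * x + v * y) z / q" using psi_le[OF adm p1 hq rx] .
  finally have "(u * legendre p q \<phi> x z + v * legendre p q \<phi> y z) / q \<le> legendre p q \<phi> (u * x + v * y) z / q"
    by (simp add: add_divide_distrib)
  thus "u * legendre p q \<phi> x z + v * legendre p q \<phi> y z \<le> legendre p q \<phi> (u *\<^sub>R x + v *\<^sub>R y) z"
    using q0 by (simp add: divide_le_cancel)
qed

lemma psi_mono:
  assumes adm: "admissible p \<phi>" and p1: "p > 1" and hq: "q = p / (p - 1)" and r: "0 < \<rho>1" "\<rho>1 \<le> \<rho>2"
  shows "legendre p q \<phi> \<rho>1 z \<le> legendre p q \<phi> \<rho>2 z"
proof -
  have q0: "q > 0" using hq p1 by simp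
  obtain w1 where w1: "legendre p q \<phi> \<rho>1 z / q \<le> z \<bullet> w1 - \<phi> \<rho>1 w1 / p" using psi_att[OF adm p1 hq r(1)] by auto
  have "\<phi> \<rho>2 w1 \<le> \<phi> \<rho>1 w1" by (rule adm_mono[OF adm p1 r])
  hence "z \<bullet> w1 - \<phi> \<rho>1 w1 / p \<le> z \<bullet> w1 - \<phi> \<rho>2 w1 / p" using p1 by (simp add: divide_right_mono)
  also have "\<dots> \<le> legendre p q \<phi> \<rho>2 z / q" using psi_le[OF adm p1 hq] r by simp
  finally have "legendre p q \<phi> \<rho>1 z / q \<le> legendre p q \<phi> \<rho>2 z / q" using w1 by linarith
  thus ?thesis using q0 by (simp add: divide_le_cancel)
qed

lemma phi_lower_gen:
  fixes w :: "'a::euclidean_space"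
  assumes p1: "p > 1" and hq: "q = p / (p - 1)" and c: "c > 0"
    and h: "\<And>z. w \<bullet> z - c * norm z powr q / q \<le> F / p"
  shows "c powr (1 - p) * norm w powr p \<le> F"
proof (cases "w = 0")
  case True
  have "0 \<le> F / p" using h[of 0] by simp
  hence "0 \<le> F" using p1 by (simp add: zero_le_divide_iff)
  thus ?thesis using True p1 by simp
next
  case False
  define n where "n = norm w"
  have n: "n > 0" using False by (simp add: n_def)
  define l where "l = (n / c) powr (p - 1)"
  have l: "l > 0" using n c by (simp add: l_def)
  define X where "X = c powr (1 - p) * n powr p"
  have e1: "c powr (1 - p) = 1 / c powr (p - 1)"
    using powr_minus_divide[of c "p - 1"] by simp
  have "l * n = n powr (p - 1) * n / c powr (p - 1)" by (simp add: l_def powr_divide)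
  also have "n powr (p - 1) * n = n powr p" using n by (simp add: powr_diff)
  finally have ln: "l * n = X" by (simp add: X_def e1)
  have pq2: "(p - 1) * q = p" using p1 hq by (simp add: field_simps)
  have "c * l powr q = c * (n / c) powr p" by (simp add: l_def powr_powr pq2)
  also have "\<dots> = n powr p * (c / c powr p)" by (simp add: powr_divide)
  also have "c / c powr p = c powr (1 - p)" using c by (simp add: powr_diff)
  finally have cl: "c * l powr q = X" by (simp add: X_def mult.commute)
  define z where "z = (l / n) *\<^sub>R w"
  have wz: "w \<bullet> z = X" using n ln by (simp add: z_def n_def power2_norm_eq_inner[symmetric] power2_eq_square)
  have nz: "norm z = l" using n l by (simp add: z_def n_def)
  have "X - X / q \<le> F / p" using h[of z] wz nz cl by simp
  moreover have "X - X / q = X / p"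
  proof -
    have e: "1/p = 1 - 1/q" unfolding hq using p1 by (simp add: field_simps)
    have "X / p = X * (1/p)" by simp
    also have "\<dots> = X * (1 - 1/q)" by (simp only: e)
    also have "\<dots> = X - X / q" by (simp add: algebra_simps)
    finally show ?thesis by simp
  qed
  ultimately have "X / p \<le> F / p" by simp
  thus ?thesis using p1 by (simp add: X_def n_def divide_le_cancel)
qed

lemma psi_nonneg:
  assumes adm: "admissible p \<phi>" and p1: "p > 1" and hq: "q = p / (p - 1)" and r: "0 < \<rho>"
  shows "0 \<le> legendre p q \<phi> \<rho> z"
  by (simp add: psi_eq[OF assms])

lemma psi_lin:
  assumes adm: "admissible p \<phi>" and p1: "p > 1" and hq: "q = p / (p - 1)" and r: "0 < \<rho>"
  shows "legendre p q \<phi> \<rho> z \<le> (1 + 2 * \<rho>) * legendre p q \<phi> 1 z"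
proof (cases "\<rho> \<le> 1")
  case True
  have "legendre p q \<phi> \<rho> z \<le> legendre p q \<phi> 1 z" using psi_mono[OF adm p1 hq r True] .
  also have "\<dots> \<le> (1 + 2 * \<rho>) * legendre p q \<phi> 1 z"
    using psi_nonneg[OF adm p1 hq, of 1 z] r by (simp add: mult_le_cancel_right1)
  finally show ?thesis .
next
  case False
  define u where "u = 1 / (2 * \<rho> - 1)"
  have "2 * \<rho> - 1 > 1" using False by simp
  hence u: "0 < u" "u < 1" by (auto simp: u_def)
  have "u * (2 * \<rho> - 1) = 1" using \<open>2 * \<rho> - 1 > 1\<close> by (simp add: u_def)
  hence "2 * (u * \<rho>) - u = 1" by (simp add: algebra_simps)
  hence comb: "u *\<^sub>R \<rho> + (1 - u) *\<^sub>R (1/2) = (1::real)" by (simp add: algebra_simps) (simp add: field_simps)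
  have "u * legendre p q \<phi> \<rho> z + (1 - u) * legendre p q \<phi> (1/2) z \<le> legendre p q \<phi> (u *\<^sub>R \<rho> + (1 - u) *\<^sub>R (1/2)) z"
  proof -
    have cc: "\<forall>x\<in>{0<..}. \<forall>y\<in>{0<..}. \<forall>u\<ge>0. \<forall>v\<ge>0. u + v = 1 \<longrightarrow>
       u * legendre p q \<phi> x z + v * legendre p q \<phi> y z \<le> legendre p q \<phi> (u *\<^sub>R x + v *\<^sub>R y) z"
      using psi_concave[OF adm p1 hq, of z] unfolding concave_on_iff by blast
    show ?thesis using cc[rule_format, of \<rho> "1/2" u "1 - u"] u r by simp
  qed
  moreover have "0 \<le> (1 - u) * legendre p q \<phi> (1/2) z"
    using psi_nonneg[OF adm p1 hq, of "1/2" z] u by simp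
  ultimately have "u * legendre p q \<phi> \<rho> z \<le> legendre p q \<phi> 1 z"
    unfolding comb by linarith
  hence "legendre p q \<phi> \<rho> z \<le> (2 * \<rho> - 1) * legendre p q \<phi> 1 z"
    using False by (simp add: u_def field_simps)
  also have "\<dots> \<le> (1 + 2 * \<rho>) * legendre p q \<phi> 1 z"
    using psi_nonneg[OF adm p1 hq, of 1 z] by (intro mult_right_mono) auto
  finally show ?thesis .
qed

lemma psi_one_bound:
  assumes adm: "admissible p \<phi>" and p1: "p > 1" and hq: "q = p / (p - 1)"
  shows "\<exists>M>0. \<forall>z. legendre p q \<phi> 1 z \<le> M * norm z powr q"
proof -
  interpret pnorm p q "\<phi> 1" by (rule adm_pnorm[OF assms]) simp
  obtain K where K: "K > 0" "\<forall>z. D z \<le> K * norm z" using D_upper by blast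
  have "legendre p q \<phi> 1 z \<le> K powr q * norm z powr q" for z
  proof -
    have "D z powr q \<le> (K * norm z) powr q" using K D_nonneg q1 by (intro powr_mono2) auto
    thus ?thesis using psi_eq[OF assms, of 1 z] K by (simp add: powr_mult)
  qed
  moreover have "K powr q > 0" using K by simp
  ultimately show ?thesis by blast
qed

lemma phi_lower:
  assumes adm: "admissible p \<phi>" and p1: "p > 1" and hq: "q = p / (p - 1)" and r: "0 < \<rho>"
    and c: "c > 0" and hc: "\<forall>z. legendre p q \<phi> \<rho> z \<le> c * norm z powr q"
  shows "c powr (1 - p) * norm w powr p \<le> \<phi> \<rho> w"
proof (rule phi_lower_gen[OF p1 hq c])
  fix z
  have q0: "q > 0" using p1 hq by simp
  have "w \<bullet> z - c * norm z powr q / q \<le> z \<bullet> w - legendre p q \<phi> \<rho> z / q"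
    using hc q0 by (simp add: inner_commute divide_right_mono)
  also have "\<dots> \<le> \<phi> \<rho> w / p" using psi_le[OF assms(1-4), of z w] by simp
  finally show "w \<bullet> z - c * norm z powr q / q \<le> \<phi> \<rho> w / p" .
qed

lemma part3:
  assumes adm: "admissible p \<phi>" and p1: "p > 1" and hq: "q = p / (p - 1)"
  shows "\<exists>a b. 0 \<le> a \<and> 0 \<le> b \<and> \<not> (a = 0 \<and> b = 0) \<and>
          (\<forall>\<rho>>0. \<forall>z w.
             legendre p q \<phi> \<rho> z \<le> (a + b * \<rho>) * norm z powr q \<and>
             (a + b * \<rho>) powr (1 - p) * norm w powr p \<le> \<phi> \<rho> w)"
proof -
  obtain M where M: "M > 0" "\<forall>z. legendre p q \<phi> 1 z \<le> M * norm z powr q" using psi_one_bound[OF assms] by blast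
  have b1: "legendre p q \<phi> \<rho> z \<le> (M + 2 * M * \<rho>) * norm z powr q" if r: "\<rho> > 0" for \<rho> z
  proof -
    have "legendre p q \<phi> \<rho> z \<le> (1 + 2 * \<rho>) * legendre p q \<phi> 1 z" by (rule psi_lin[OF assms r])
    also have "\<dots> \<le> (1 + 2 * \<rho>) * (M * norm z powr q)" using M r by (intro mult_left_mono) auto
    finally show ?thesis by (simp add: algebra_simps)
  qed
  have b2: "(M + 2 * M * \<rho>) powr (1 - p) * norm w powr p \<le> \<phi> \<rho> w" if r: "\<rho> > 0" for \<rho> w
  proof -
    have "M + 2 * M * \<rho> > 0" using M r by (simp add: add_pos_nonneg)
    thus ?thesis using phi_lower[OF assms r] b1[OF r] by blast
  qed
  show ?thesis
    by (rule exI[of _ M], rule exI[of _ "2 * M"]) (use M b1 b2 in auto)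
qed

lemma div_le_aux:
  fixes X \<alpha> C :: real
  assumes "0 \<le> X" "0 < \<alpha>" "1 / \<alpha> \<le> C"
  shows "X / C \<le> \<alpha> * X"
proof -
  have "1 / \<alpha> > 0" using assms by simp
  hence C: "C > 0" using assms by linarith
  have "1 \<le> \<alpha> * C" using assms by (simp add: divide_le_eq mult.commute)
  from mult_left_mono[OF this assms(1)] have "X \<le> \<alpha> * X * C" by (simp add: algebra_simps)
  thus ?thesis using C by (simp add: divide_le_eq)
qed

lemma part4:
  fixes \<phi> :: "real \<Rightarrow> 'a::euclidean_space \<Rightarrow> real"
  assumes adm: "admissible p \<phi>" and p1: "p > 1" and hq: "q = p / (p - 1)"
    and r: "0 < r0" "r0 \<le> r1"
  shows "\<exists>C>0. \<forall>\<rho>\<in>{r0..r1}. \<forall>w z.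
             norm w powr p / C \<le> \<phi> \<rho> w \<and> \<phi> \<rho> w \<le> C * norm w powr p \<and>
             norm z powr q / C \<le> legendre p q \<phi> \<rho> z \<and> legendre p q \<phi> \<rho> z \<le> C * norm z powr q"
proof -
  obtain a b where ab: "0 \<le> a" "0 \<le> b" "\<not> (a = 0 \<and> b = 0)"
    "\<forall>\<rho>>0. \<forall>z w. legendre p q \<phi> \<rho> z \<le> (a + b * \<rho>) * norm z powr q \<and>
             (a + b * \<rho>) powr (1 - p) * norm w powr p \<le> \<phi> \<rho> w"
    using part3[OF adm p1 hq] by blast
  define c1 where "c1 = a + b * r1"
  have abpos: "0 < a + b * x" if "x > 0" for x
  proof (cases "a > 0")
    case True thus ?thesis using ab that by (simp add: add_pos_nonneg)
  next
    case False hence "b > 0" "a = 0" using ab by auto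
    thus ?thesis using that by simp
  qed
  have c1: "c1 > 0" unfolding c1_def using abpos r by simp
  interpret P0: pnorm p q "\<phi> r0" by (rule adm_pnorm[OF adm p1 hq r(1)])
  obtain M0 where M0: "M0 > 0" "\<forall>w. \<phi> r0 w \<le> M0 * norm w powr p" using P0.upper by blast
  obtain k where k: "k > 0" "\<forall>z. k * norm z \<le> P0.D z" using P0.D_lower by blast
  define C where "C = max (max M0 c1) (max (1 / c1 powr (1 - p)) (1 / k powr q))"
  have C: "C > 0" "M0 \<le> C" "c1 \<le> C" "1 / c1 powr (1 - p) \<le> C" "1 / k powr q \<le> C"
    using M0 by (auto simp: C_def)
  show ?thesis
  proof (intro exI[of _ C] conjI ballI allI C(1))
    fix \<rho> :: real and w z :: 'a assume \<rho>: "\<rho> \<in> {r0..r1}"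
    have rp: "\<rho> > 0" using \<rho> r by auto
    have abr: "0 < a + b * \<rho>" "a + b * \<rho> \<le> c1" using ab abpos[OF rp] \<rho> unfolding c1_def
      by (auto simp: mult_left_mono)
    have "norm w powr p / C \<le> c1 powr (1 - p) * norm w powr p"
      using C c1 by (intro div_le_aux) auto
    also have "\<dots> \<le> (a + b * \<rho>) powr (1 - p) * norm w powr p"
      using abr p1 by (intro mult_right_mono powr_mono2') auto
    also have "\<dots> \<le> \<phi> \<rho> w" using ab(4) rp by blast
    finally show "norm w powr p / C \<le> \<phi> \<rho> w" .
    have "\<phi> \<rho> w \<le> \<phi> r0 w" using adm_mono[OF adm p1 r(1)] \<rho> by auto
    also have "\<dots> \<le> M0 * norm w powr p" using M0 by blast
    also have "\<dots> \<le> C * norm w powr p" using C by (intro mult_right_mono) auto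
    finally show "\<phi> \<rho> w \<le> C * norm w powr p" .
    have "norm z powr q / C \<le> k powr q * norm z powr q"
      using C k by (intro div_le_aux) auto
    also have "\<dots> = (k * norm z) powr q" by (simp add: powr_mult)
    also have "\<dots> \<le> P0.D z powr q" using k P0.q1 by (intro powr_mono2) auto
    also have "\<dots> = legendre p q \<phi> r0 z" using psi_eq[OF adm p1 hq r(1)] by simp
    also have "\<dots> \<le> legendre p q \<phi> \<rho> z" using psi_mono[OF adm p1 hq r(1)] \<rho> by auto
    finally show "norm z powr q / C \<le> legendre p q \<phi> \<rho> z" .
    have "legendre p q \<phi> \<rho> z \<le> (a + b * \<rho>) * norm z powr q" using ab(4) rp by blast
    also have "\<dots> \<le> c1 * norm z powr q" using abr by (intro mult_right_mono) auto
    also have "\<dots> \<le> C * norm z powr q" using C by (intro mult_right_mono) auto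
    finally show "legendre p q \<phi> \<rho> z \<le> C * norm z powr q" .
  qed
qed

lemma psi_root:
  assumes adm: "admissible p \<phi>" and p1: "p > 1" and hq: "q = p / (p - 1)" and r: "0 < \<rho>"
  shows "legendre p q \<phi> \<rho> z powr (1/q) = pnorm.D (\<phi> \<rho>) z"
proof -
  interpret pnorm p q "\<phi> \<rho>" by (rule adm_pnorm[OF assms])
  show ?thesis using psi_eq[OF assms] q1 D_nonneg by (simp add: powr_powr)
qed

lemma psi_hom:
  assumes adm: "admissible p \<phi>" and p1: "p > 1" and hq: "q = p / (p - 1)" and r: "0 < \<rho>"
  shows "legendre p q \<phi> \<rho> (c *\<^sub>R z) = \<bar>c\<bar> powr q * legendre p q \<phi> \<rho> z"
proof -
  interpret pnorm p q "\<phi> \<rho>" by (rule adm_pnorm[OF assms])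
  show ?thesis using psi_eq[OF assms] by (simp add: D_hom powr_mult)
qed

lemma psi_pos:
  assumes adm: "admissible p \<phi>" and p1: "p > 1" and hq: "q = p / (p - 1)" and r: "0 < \<rho>" and z: "z \<noteq> 0"
  shows "0 < legendre p q \<phi> \<rho> z"
proof -
  interpret pnorm p q "\<phi> \<rho>" by (rule adm_pnorm[OF assms(1-4)])
  show ?thesis using psi_eq[OF assms(1-4)] D_pos[OF z] by simp
qed

lemma psi_cvx:
  assumes adm: "admissible p \<phi>" and p1: "p > 1" and hq: "q = p / (p - 1)" and r: "0 < \<rho>"
  shows "convex_on UNIV (legendre p q \<phi> \<rho>)"
  unfolding convex_on_def
proof (intro conjI ballI allI impI convex_UNIV)
  fix z1 z2 :: 'a and u v :: real assume h: "0 \<le> u" "0 \<le> v" "u + v = 1"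
  have q0: "q > 0" using hq p1 by simp
  obtain w where w: "legendre p q \<phi> \<rho> (u *\<^sub>R z1 + v *\<^sub>R z2) / q \<le> (u *\<^sub>R z1 + v *\<^sub>R z2) \<bullet> w - \<phi> \<rho> w / p"
    using psi_att[OF assms] by blast
  also have "\<dots> = u * (z1 \<bullet> w - \<phi> \<rho> w / p) + v * (z2 \<bullet> w - \<phi> \<rho> w / p)"
    using h by (simp add: inner_add_left algebra_simps) (metis add_divide_distrib distrib_right mult_1 mult.commute)
  also have "\<dots> \<le> u * (legendre p q \<phi> \<rho> z1 / q) + v * (legendre p q \<phi> \<rho> z2 / q)"
    using h psi_le[OF assms] by (intro add_mono mult_left_mono) auto
  finally have "legendre p q \<phi> \<rho> (u *\<^sub>R z1 + v *\<^sub>R z2) / q \<le> (u * legendre p q \<phi> \<rho> z1 + v * legendre p q \<phi> \<rho> z2) / q"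
    by (simp add: add_divide_distrib)
  thus "legendre p q \<phi> \<rho> (u *\<^sub>R z1 + v *\<^sub>R z2) \<le> u * legendre p q \<phi> \<rho> z1 + v * legendre p q \<phi> \<rho> z2"
    using q0 by (simp add: divide_le_cancel)
qed

lemma psi_bidual:
  assumes adm: "admissible p \<phi>" and p1: "p > 1" and hq: "q = p / (p - 1)" and r: "0 < \<rho>"
  shows "ereal (\<phi> \<rho> w / p) = (SUP z. ereal (w \<bullet> z - legendre p q \<phi> \<rho> z / q))"
proof -
  interpret pnorm p q "\<phi> \<rho>" by (rule adm_pnorm[OF assms])
  show ?thesis using bidual[of w] psi_eq[OF assms] by simp
qed

lemma conv_back:
  fixes \<phi> \<psi> :: "real \<Rightarrow> 'a::euclidean_space \<Rightarrow> real"
  assumes p1: "p > 1" and hq: "q = p / (p - 1)"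
    and nn: "\<forall>\<rho>>0. \<forall>w. 0 \<le> \<phi> \<rho> w"
    and psnn: "\<forall>\<rho>>0. \<forall>z. 0 \<le> \<psi> \<rho> z"
    and pshom: "\<forall>\<rho>>0. \<forall>c z. \<psi> \<rho> (c *\<^sub>R z) = \<bar>c\<bar> powr q * \<psi> \<rho> z"
    and pspos: "\<forall>\<rho>>0. \<forall>z. z \<noteq> 0 \<longrightarrow> 0 < \<psi> \<rho> z"
    and psconc: "\<forall>z. concave_on {0<..} (\<lambda>\<rho>. \<psi> \<rho> z)"
    and rep: "\<forall>\<rho>>0. \<forall>w. ereal (\<phi> \<rho> w / p) = (SUP z. ereal (w \<bullet> z - \<psi> \<rho> z / q))"
  shows "admissible p \<phi>"
proof -
  have q0: "q > 0" and q1: "q > 1" using p1 hq by (auto simp: less_divide_eq)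
  have rep_le: "w \<bullet> z - \<psi> \<rho> z / q \<le> \<phi> \<rho> w / p" if "\<rho> > 0" for \<rho> w z
  proof -
    have "ereal (w \<bullet> z - \<psi> \<rho> z / q) \<le> (SUP z. ereal (w \<bullet> z - \<psi> \<rho> z / q))" by (rule SUP_upper) simp
    also have "\<dots> = ereal (\<phi> \<rho> w / p)" using rep that by simp
    finally show ?thesis by simp
  qed
  have rep_ge: "\<phi> \<rho> w / p \<le> X" if "\<rho> > 0" "\<And>z. w \<bullet> z - \<psi> \<rho> z / q \<le> X" for \<rho> w X
  proof -
    have "ereal (\<phi> \<rho> w / p) = (SUP z. ereal (w \<bullet> z - \<psi> \<rho> z / q))" using rep that(1) by simp
    also have "\<dots> \<le> ereal X" by (rule SUP_least) (use that(2) in simp)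
    finally show ?thesis by simp
  qed
  have cvx: "convex_on ({0<..} \<times> UNIV) (\<lambda>x. \<phi> (fst x) (snd x))"
    unfolding convex_on_def
  proof (intro conjI ballI allI impI)
    show "convex ({0::real<..} \<times> (UNIV::'a set))" by (intro convex_Times convex_UNIV) (simp add: convex_real_interval)
    fix x y :: "real \<times> 'a" and u v :: real
    assume h: "x \<in> {0<..} \<times> UNIV" "y \<in> {0<..} \<times> UNIV" "0 \<le> u" "0 \<le> v" "u + v = 1"
    obtain r1 w1 r2 w2 where xy: "x = (r1, w1)" "y = (r2, w2)" by (cases x, cases y) auto
    have r12: "r1 > 0" "r2 > 0" using h xy by auto
    have rr: "u * r1 + v * r2 > 0" using h r12 by (cases "u = 0") (auto intro: add_pos_nonneg add_nonneg_pos)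
    have "\<phi> (u * r1 + v * r2) (u *\<^sub>R w1 + v *\<^sub>R w2) / p \<le> (u * \<phi> r1 w1 + v * \<phi> r2 w2) / p"
    proof (rule rep_ge[OF rr])
      fix z
      have conc: "u * \<psi> r1 z + v * \<psi> r2 z \<le> \<psi> (u * r1 + v * r2) z"
        using psconc[rule_format, of z] h r12 unfolding concave_on_iff by auto
      have "(u *\<^sub>R w1 + v *\<^sub>R w2) \<bullet> z - \<psi> (u * r1 + v * r2) z / q
          \<le> (u *\<^sub>R w1 + v *\<^sub>R w2) \<bullet> z - (u * \<psi> r1 z + v * \<psi> r2 z) / q"
        using conc q0 by (simp add: divide_right_mono)
      also have "\<dots> = u * (w1 \<bullet> z - \<psi> r1 z / q) + v * (w2 \<bullet> z - \<psi> r2 z / q)"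
        by (simp add: inner_add_left algebra_simps add_divide_distrib)
      also have "\<dots> \<le> u * (\<phi> r1 w1 / p) + v * (\<phi> r2 w2 / p)"
        using h rep_le r12 by (intro add_mono mult_left_mono) auto
      also have "\<dots> = (u * \<phi> r1 w1 + v * \<phi> r2 w2) / p" by (simp add: add_divide_distrib)
      finally show "(u *\<^sub>R w1 + v *\<^sub>R w2) \<bullet> z - \<psi> (u * r1 + v * r2) z / q \<le> (u * \<phi> r1 w1 + v * \<phi> r2 w2) / p" .
    qed
    hence "\<phi> (u * r1 + v * r2) (u *\<^sub>R w1 + v *\<^sub>R w2) \<le> u * \<phi> r1 w1 + v * \<phi> r2 w2"
      using p1 by (simp add: divide_le_cancel)
    thus "\<phi> (fst (u *\<^sub>R x + v *\<^sub>R y)) (snd (u *\<^sub>R x + v *\<^sub>R y)) \<le> u * \<phi> (fst x) (snd x) + v * \<phi> (fst y) (snd y)"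
      by (simp add: xy)
  qed
  have hom_le: "\<phi> \<rho> (t *\<^sub>R w) \<le> \<bar>t\<bar> powr p * \<phi> \<rho> w" if r: "\<rho> > 0" and t: "t \<noteq> 0" for \<rho> t w
  proof -
    define s where "s = t / \<bar>t\<bar> powr p"
    have at: "\<bar>t\<bar> > 0" using t by simp
    have ts: "\<bar>t\<bar> powr p * s = t" using at by (simp add: s_def)
    have as: "\<bar>s\<bar> powr q = \<bar>t\<bar> powr (- p)"
    proof -
      have "\<bar>s\<bar> = \<bar>t\<bar> powr (1 - p)" using at by (simp add: s_def abs_divide powr_diff)
      hence "\<bar>s\<bar> powr q = \<bar>t\<bar> powr ((1 - p) * q)" by (simp add: powr_powr)
      also have "(1 - p) * q = - p" using p1 unfolding hq by (simp add: field_simps)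
      finally show ?thesis .
    qed
    have "\<phi> \<rho> (t *\<^sub>R w) / p \<le> \<bar>t\<bar> powr p * \<phi> \<rho> w / p"
    proof (rule rep_ge[OF r])
      fix z
      have "w \<bullet> (s *\<^sub>R z) - \<psi> \<rho> (s *\<^sub>R z) / q \<le> \<phi> \<rho> w / p" using rep_le[OF r] .
      hence "s * (w \<bullet> z) - \<bar>t\<bar> powr (- p) * \<psi> \<rho> z / q \<le> \<phi> \<rho> w / p"
        using pshom r as by simp
      hence "\<bar>t\<bar> powr p * (s * (w \<bullet> z) - \<bar>t\<bar> powr (- p) * \<psi> \<rho> z / q) \<le> \<bar>t\<bar> powr p * (\<phi> \<rho> w / p)"
        by (intro mult_left_mono) auto
      moreover have "\<bar>t\<bar> powr p * (s * (w \<bullet> z) - \<bar>t\<bar> powr (- p) * \<psi> \<rho> z / q) = (t *\<^sub>R w) \<bullet> z - \<psi> \<rho> z / q"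
      proof -
        have "\<bar>t\<bar> powr p * \<bar>t\<bar> powr (- p) = 1" using at by (simp add: powr_minus)
        thus ?thesis using ts by (simp add: algebra_simps)
      qed
      ultimately show "(t *\<^sub>R w) \<bullet> z - \<psi> \<rho> z / q \<le> \<bar>t\<bar> powr p * \<phi> \<rho> w / p" by simp
    qed
    thus ?thesis using p1 by (simp add: divide_le_cancel)
  qed
  have phi0: "\<phi> \<rho> 0 = 0" if r: "\<rho> > 0" for \<rho>
  proof -
    have "\<phi> \<rho> 0 / p \<le> 0" by (rule rep_ge[OF r]) (use psnn r q0 in simp)
    thus ?thesis using nn r p1 by (smt (verit) divide_pos_pos)
  qed
  have hom: "\<phi> \<rho> (t *\<^sub>R w) = \<bar>t\<bar> powr p * \<phi> \<rho> w" if r: "\<rho> > 0" for \<rho> t w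
  proof (cases "t = 0")
    case True thus ?thesis using phi0[OF r] by simp
  next
    case False
    have "\<phi> \<rho> w = \<phi> \<rho> ((1/t) *\<^sub>R (t *\<^sub>R w))" using False by simp
    also have "\<dots> \<le> \<bar>1/t\<bar> powr p * \<phi> \<rho> (t *\<^sub>R w)" using hom_le[OF r, of "1/t" "t *\<^sub>R w"] False by simp
    finally have "\<bar>t\<bar> powr p * \<phi> \<rho> w \<le> \<bar>t\<bar> powr p * (\<bar>1/t\<bar> powr p * \<phi> \<rho> (t *\<^sub>R w))"
      by (intro mult_left_mono) auto
    also have "\<dots> = \<phi> \<rho> (t *\<^sub>R w)" using False by (simp add: powr_divide abs_divide)
    finally show ?thesis using hom_le[OF r False, of w] by simp
  qed
  have pos: "\<forall>w. w \<noteq> 0 \<longrightarrow> \<phi> 1 w > 0"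
  proof (intro allI impI)
    fix w :: 'a assume w: "w \<noteq> 0"
    define P where "P = \<psi> 1 w"
    have P: "P > 0" using pspos w by (simp add: P_def)
    define n2 where "n2 = w \<bullet> w"
    have n2: "n2 > 0" using w by (simp add: n2_def)
    define e where "e = (q * n2 / (2 * P)) powr (1 / (q - 1))"
    have e: "e > 0" using q0 n2 P by (simp add: e_def)
    have eq1: "e powr (q - 1) = q * n2 / (2 * P)" using q1 q0 n2 P by (simp add: e_def powr_powr)
    have eq: "e powr q = e * (q * n2 / (2 * P))"
    proof -
      have "e * e powr (q - 1) = e powr (1 + (q - 1))" using e by (simp add: powr_mult_base)
      thus ?thesis using eq1 by simp
    qed
    have "w \<bullet> (e *\<^sub>R w) - \<psi> 1 (e *\<^sub>R w) / q \<le> \<phi> 1 w / p" by (rule rep_le) simp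
    moreover have "w \<bullet> (e *\<^sub>R w) - \<psi> 1 (e *\<^sub>R w) / q = e * n2 / 2"
      using pshom e eq P q0 by (simp add: n2_def P_def field_simps)
    ultimately have "0 < \<phi> 1 w / p" using e n2 by (smt (verit) divide_pos_pos mult_pos_pos)
    thus "\<phi> 1 w > 0" using p1 by (simp add: zero_less_divide_iff)
  qed
  have ex: "\<exists>\<rho>0>0. \<forall>w. w \<noteq> 0 \<longrightarrow> \<phi> \<rho>0 w > 0" using pos by (intro exI[of _ 1]) simp
  show ?thesis unfolding admissible_def using nn cvx hom ex by blast
qed


theorem mainTheorem1:
  fixes p q :: real and \<phi> :: "real \<Rightarrow> 'a::euclidean_space \<Rightarrow> real"
  assumes hp: "p > 1" and hq: "q = p / (p - 1)"
  shows
   "(admissible p \<phi> \<longrightarrow>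
      (let \<psi> = legendre p q \<phi> in
       \<comment> \<open>(1)\<close>
       (\<forall>\<rho>>0.
          is_norm (\<lambda>w. \<phi> \<rho> w powr (1/p)) \<and>
          is_norm (\<lambda>z. \<psi> \<rho> z powr (1/q)) \<and>
          (\<forall>z. ereal (\<psi> \<rho> z powr (1/q)) =
               (SUP w\<in>-{0}. ereal ((w \<bullet> z) / \<phi> \<rho> w powr (1/p)))) \<and>
          (\<forall>w. ereal (\<phi> \<rho> w powr (1/p)) =
               (SUP z\<in>-{0}. ereal ((w \<bullet> z) / \<psi> \<rho> z powr (1/q)))) \<and>
          (\<forall>c z. \<psi> \<rho> (c *\<^sub>R z) = \<bar>c\<bar> powr q * \<psi> \<rho> z)) \<and>
       \<comment> \<open>(2)\<close>
       (\<forall>\<rho>>0. \<forall>z. legendre_ereal p q \<phi> \<rho> z \<noteq> \<infinity> \<and> 0 \<le> legendre_ereal p q \<phi> \<rho> z) \<and>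
       (\<forall>z. concave_on {0<..} (\<lambda>\<rho>. \<psi> \<rho> z) \<and>
            (\<forall>\<rho>1 \<rho>2. 0 < \<rho>1 \<longrightarrow> \<rho>1 \<le> \<rho>2 \<longrightarrow> \<psi> \<rho>1 z \<le> \<psi> \<rho>2 z)) \<and>
       (\<forall>w. convex_on {0<..} (\<lambda>\<rho>. \<phi> \<rho> w) \<and>
            (\<forall>\<rho>1 \<rho>2. 0 < \<rho>1 \<longrightarrow> \<rho>1 \<le> \<rho>2 \<longrightarrow> \<phi> \<rho>2 w \<le> \<phi> \<rho>1 w)) \<and>
       \<comment> \<open>(3)\<close>
       (\<exists>a b. 0 \<le> a \<and> 0 \<le> b \<and> \<not> (a = 0 \<and> b = 0) \<and>
          (\<forall>\<rho>>0. \<forall>z w.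
             \<psi> \<rho> z \<le> (a + b * \<rho>) * norm z powr q \<and>
             (a + b * \<rho>) powr (1 - p) * norm w powr p \<le> \<phi> \<rho> w)) \<and>
       \<comment> \<open>(4)\<close>
       (\<forall>r0 r1. 0 < r0 \<longrightarrow> r0 \<le> r1 \<longrightarrow>
          (\<exists>C>0. \<forall>\<rho>\<in>{r0..r1}. \<forall>w z.
             norm w powr p / C \<le> \<phi> \<rho> w \<and> \<phi> \<rho> w \<le> C * norm w powr p \<and>
             norm z powr q / C \<le> \<psi> \<rho> z \<and> \<psi> \<rho> z \<le> C * norm z powr q)))) \<and>
    \<comment> \<open>converse characterisation\<close>
    ((\<forall>\<rho>>0. \<forall>w. 0 \<le> \<phi> \<rho> w) \<longrightarrow>
      (admissible p \<phi> \<longleftrightarrow>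
        (\<exists>\<psi> :: real \<Rightarrow> 'a \<Rightarrow> real.
           (\<forall>\<rho>>0. \<forall>z. 0 \<le> \<psi> \<rho> z) \<and>
           (\<forall>\<rho>>0. convex_on UNIV (\<psi> \<rho>)) \<and>
           (\<forall>\<rho>>0. \<forall>c z. \<psi> \<rho> (c *\<^sub>R z) = \<bar>c\<bar> powr q * \<psi> \<rho> z) \<and>
           (\<forall>\<rho>>0. \<forall>z. z \<noteq> 0 \<longrightarrow> 0 < \<psi> \<rho> z) \<and>
           (\<forall>z. concave_on {0<..} (\<lambda>\<rho>. \<psi> \<rho> z)) \<and>
           (\<forall>\<rho>>0. \<forall>w. ereal (\<phi> \<rho> w / p) =
                (SUP z. ereal (w \<bullet> z - \<psi> \<rho> z / q))))))"
proof -
  have main1: "(let \<psi> = legendre p q \<phi> in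
       (\<forall>\<rho>>0.
          is_norm (\<lambda>w. \<phi> \<rho> w powr (1/p)) \<and>
          is_norm (\<lambda>z. \<psi> \<rho> z powr (1/q)) \<and>
          (\<forall>z. ereal (\<psi> \<rho> z powr (1/q)) =
               (SUP w\<in>-{0}. ereal ((w \<bullet> z) / \<phi> \<rho> w powr (1/p)))) \<and>
          (\<forall>w. ereal (\<phi> \<rho> w powr (1/p)) =
               (SUP z\<in>-{0}. ereal ((w \<bullet> z) / \<psi> \<rho> z powr (1/q)))) \<and>
          (\<forall>c z. \<psi> \<rho> (c *\<^sub>R z) = \<bar>c\<bar> powr q * \<psi> \<rho> z)) \<and>
       (\<forall>\<rho>>0. \<forall>z. legendre_ereal p q \<phi> \<rho> z \<noteq> \<infinity> \<and> 0 \<le> legendre_ereal p q \<phi> \<rho> z) \<and>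
       (\<forall>z. concave_on {0<..} (\<lambda>\<rho>. \<psi> \<rho> z) \<and>
            (\<forall>\<rho>1 \<rho>2. 0 < \<rho>1 \<longrightarrow> \<rho>1 \<le> \<rho>2 \<longrightarrow> \<psi> \<rho>1 z \<le> \<psi> \<rho>2 z)) \<and>
       (\<forall>w. convex_on {0<..} (\<lambda>\<rho>. \<phi> \<rho> w) \<and>
            (\<forall>\<rho>1 \<rho>2. 0 < \<rho>1 \<longrightarrow> \<rho>1 \<le> \<rho>2 \<longrightarrow> \<phi> \<rho>2 w \<le> \<phi> \<rho>1 w)) \<and>
       (\<exists>a b. 0 \<le> a \<and> 0 \<le> b \<and> \<not> (a = 0 \<and> b = 0) \<and>
          (\<forall>\<rho>>0. \<forall>z w.
             \<psi> \<rho> z \<le> (a + b * \<rho>) * norm z powr q \<and>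
             (a + b * \<rho>) powr (1 - p) * norm w powr p \<le> \<phi> \<rho> w)) \<and>
       (\<forall>r0 r1. 0 < r0 \<longrightarrow> r0 \<le> r1 \<longrightarrow>
          (\<exists>C>0. \<forall>\<rho>\<in>{r0..r1}. \<forall>w z.
             norm w powr p / C \<le> \<phi> \<rho> w \<and> \<phi> \<rho> w \<le> C * norm w powr p \<and>
             norm z powr q / C \<le> \<psi> \<rho> z \<and> \<psi> \<rho> z \<le> C * norm z powr q)))"
    if adm: "admissible p \<phi>"
  proof -
    have P1: "is_norm (\<lambda>w. \<phi> \<rho> w powr (1/p)) \<and>
          is_norm (\<lambda>z. legendre p q \<phi> \<rho> z powr (1/q)) \<and>
          (\<forall>z. ereal (legendre p q \<phi> \<rho> z powr (1/q)) =
               (SUP w\<in>-{0}. ereal ((w \<bullet> z) / \<phi> \<rho> w powr (1/p)))) \<and>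
          (\<forall>w. ereal (\<phi> \<rho> w powr (1/p)) =
               (SUP z\<in>-{0}. ereal ((w \<bullet> z) / legendre p q \<phi> \<rho> z powr (1/q)))) \<and>
          (\<forall>c z. legendre p q \<phi> \<rho> (c *\<^sub>R z) = \<bar>c\<bar> powr q * legendre p q \<phi> \<rho> z)"
      if r: "\<rho> > 0" for \<rho>
    proof -
      interpret pnorm p q "\<phi> \<rho>" by (rule adm_pnorm[OF adm hp hq r])
      have Ne: "N = (\<lambda>w. \<phi> \<rho> w powr (1/p))" by (rule ext) (simp add: N_def)
      have De: "(\<lambda>z. legendre p q \<phi> \<rho> z powr (1/q)) = D" by (rule ext) (simp add: psi_root[OF adm hp hq r])
      show ?thesis
        using N_norm D_norm dual1 dual2 psi_hom[OF adm hp hq r]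
        unfolding Ne by (simp add: De psi_root[OF adm hp hq r])
    qed
    have P2: "\<forall>\<rho>>0. \<forall>z. legendre_ereal p q \<phi> \<rho> z \<noteq> \<infinity> \<and> 0 \<le> legendre_ereal p q \<phi> \<rho> z"
      using psi_ereal[OF adm hp hq] by simp
    have P3: "\<forall>z. concave_on {0<..} (\<lambda>\<rho>. legendre p q \<phi> \<rho> z) \<and>
            (\<forall>\<rho>1 \<rho>2. 0 < \<rho>1 \<longrightarrow> \<rho>1 \<le> \<rho>2 \<longrightarrow> legendre p q \<phi> \<rho>1 z \<le> legendre p q \<phi> \<rho>2 z)"
      using psi_concave[OF adm hp hq] psi_mono[OF adm hp hq] by blast
    have P4: "\<forall>w. convex_on {0<..} (\<lambda>\<rho>. \<phi> \<rho> w) \<and>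
            (\<forall>\<rho>1 \<rho>2. 0 < \<rho>1 \<longrightarrow> \<rho>1 \<le> \<rho>2 \<longrightarrow> \<phi> \<rho>2 w \<le> \<phi> \<rho>1 w)"
      using adm_cvx_rho[OF adm] adm_mono[OF adm hp] by blast
    have P1': "\<forall>\<rho>>0. is_norm (\<lambda>w. \<phi> \<rho> w powr (1/p)) \<and>
          is_norm (\<lambda>z. legendre p q \<phi> \<rho> z powr (1/q)) \<and>
          (\<forall>z. ereal (legendre p q \<phi> \<rho> z powr (1/q)) =
               (SUP w\<in>-{0}. ereal ((w \<bullet> z) / \<phi> \<rho> w powr (1/p)))) \<and>
          (\<forall>w. ereal (\<phi> \<rho> w powr (1/p)) =
               (SUP z\<in>-{0}. ereal ((w \<bullet> z) / legendre p q \<phi> \<rho> z powr (1/q)))) \<and>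
          (\<forall>c z. legendre p q \<phi> \<rho> (c *\<^sub>R z) = \<bar>c\<bar> powr q * legendre p q \<phi> \<rho> z)"
      using P1 by blast
    have P6: "\<forall>r0 r1. 0 < r0 \<longrightarrow> r0 \<le> r1 \<longrightarrow>
          (\<exists>C>0. \<forall>\<rho>\<in>{r0..r1}. \<forall>w z.
             norm w powr p / C \<le> \<phi> \<rho> w \<and> \<phi> \<rho> w \<le> C * norm w powr p \<and>
             norm z powr q / C \<le> legendre p q \<phi> \<rho> z \<and> legendre p q \<phi> \<rho> z \<le> C * norm z powr q)"
      using part4[OF adm hp hq] by blast
    show ?thesis
      unfolding Let_def using P1' P2 P3 P4 part3[OF adm hp hq] P6
      by (intro conjI) assumption+
  qed
  have main2: "(\<forall>\<rho>>0. \<forall>w. 0 \<le> \<phi> \<rho> w) \<longrightarrow>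
      (admissible p \<phi> \<longleftrightarrow>
        (\<exists>\<psi> :: real \<Rightarrow> 'a \<Rightarrow> real.
           (\<forall>\<rho>>0. \<forall>z. 0 \<le> \<psi> \<rho> z) \<and>
           (\<forall>\<rho>>0. convex_on UNIV (\<psi> \<rho>)) \<and>
           (\<forall>\<rho>>0. \<forall>c z. \<psi> \<rho> (c *\<^sub>R z) = \<bar>c\<bar> powr q * \<psi> \<rho> z) \<and>
           (\<forall>\<rho>>0. \<forall>z. z \<noteq> 0 \<longrightarrow> 0 < \<psi> \<rho> z) \<and>
           (\<forall>z. concave_on {0<..} (\<lambda>\<rho>. \<psi> \<rho> z)) \<and>
           (\<forall>\<rho>>0. \<forall>w. ereal (\<phi> \<rho> w / p) =
                (SUP z. ereal (w \<bullet> z - \<psi> \<rho> z / q)))))"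
  proof (intro impI iffI)
    assume nn0: "\<forall>\<rho>>0. \<forall>w. 0 \<le> \<phi> \<rho> w"
    assume adm: "admissible p \<phi>"
    show "\<exists>\<psi> :: real \<Rightarrow> 'a \<Rightarrow> real.
           (\<forall>\<rho>>0. \<forall>z. 0 \<le> \<psi> \<rho> z) \<and>
           (\<forall>\<rho>>0. convex_on UNIV (\<psi> \<rho>)) \<and>
           (\<forall>\<rho>>0. \<forall>c z. \<psi> \<rho> (c *\<^sub>R z) = \<bar>c\<bar> powr q * \<psi> \<rho> z) \<and>
           (\<forall>\<rho>>0. \<forall>z. z \<noteq> 0 \<longrightarrow> 0 < \<psi> \<rho> z) \<and>
           (\<forall>z. concave_on {0<..} (\<lambda>\<rho>. \<psi> \<rho> z)) \<and>
           (\<forall>\<rho>>0. \<forall>w. ereal (\<phi> \<rho> w / p) =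
                (SUP z. ereal (w \<bullet> z - \<psi> \<rho> z / q)))"
      apply (rule exI[of _ "legendre p q \<phi>"])
      apply (intro conjI allI impI)
           apply (erule psi_nonneg[OF adm hp hq])
          apply (erule psi_cvx[OF adm hp hq])
         apply (erule psi_hom[OF adm hp hq])
        apply (erule psi_pos[OF adm hp hq], assumption)
       apply (rule psi_concave[OF adm hp hq])
      apply (erule psi_bidual[OF adm hp hq])
      done
  next
    assume nn: "\<forall>\<rho>>0. \<forall>w. 0 \<le> \<phi> \<rho> w"
    assume "\<exists>\<psi> :: real \<Rightarrow> 'a \<Rightarrow> real.
           (\<forall>\<rho>>0. \<forall>z. 0 \<le> \<psi> \<rho> z) \<and>
           (\<forall>\<rho>>0. convex_on UNIV (\<psi> \<rho>)) \<and>
           (\<forall>\<rho>>0. \<forall>c z. \<psi> \<rho> (c *\<^sub>R z) = \<bar>c\<bar> powr q * \<psi> \<rho> z) \<and>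
           (\<forall>\<rho>>0. \<forall>z. z \<noteq> 0 \<longrightarrow> 0 < \<psi> \<rho> z) \<and>
           (\<forall>z. concave_on {0<..} (\<lambda>\<rho>. \<psi> \<rho> z)) \<and>
           (\<forall>\<rho>>0. \<forall>w. ereal (\<phi> \<rho> w / p) =
                (SUP z. ereal (w \<bullet> z - \<psi> \<rho> z / q)))"
    then obtain \<psi> :: "real \<Rightarrow> 'a \<Rightarrow> real" where h:
           "(\<forall>\<rho>>0. \<forall>z. 0 \<le> \<psi> \<rho> z)"
           "(\<forall>\<rho>>0. \<forall>c z. \<psi> \<rho> (c *\<^sub>R z) = \<bar>c\<bar> powr q * \<psi> \<rho> z)"
           "(\<forall>\<rho>>0. \<forall>z. z \<noteq> 0 \<longrightarrow> 0 < \<psi> \<rho> z)"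
           "(\<forall>z. concave_on {0<..} (\<lambda>\<rho>. \<psi> \<rho> z))"
           "(\<forall>\<rho>>0. \<forall>w. ereal (\<phi> \<rho> w / p) = (SUP z. ereal (w \<bullet> z - \<psi> \<rho> z / q)))"
      by blast
    show "admissible p \<phi>" by (rule conv_back[OF hp hq nn h])
  qed
  show ?thesis
    apply (rule conjI)
     apply (rule impI)
     apply (erule main1)
    apply (rule main2)
    done
qed

end
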